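(* For every finite simple graph $G$, $\mathrm{box}(G)=\mathrm{box}(CC(G))$.
   Context: An axis-parallel $t$-dimensional box is a Cartesian product $R_1\times\cdots\times R_t$ of closed real intervals $R_i=[a_i,b_i]$. The boxicity $\mathrm{box}(G)$ of a graph $G$ is the minimum integer $t$ such that $G$ is the intersection graph of axis-parallel $t$-dimensional boxes, i.e. there is a map $f$ from $V(G)$ to $t$-dimensional boxes with $(u,v)\in E(G)\iff f(u)\cap f(v)\neq\emptyset$ for distinct $u,v$. A critical clique of $G$ is a maximal clique of $G$ all of whose vertices have the same (closed) neighbourhood in $G$. The critical clique graph $CC(G)$ has one vertex for each critical clique of $G$, two such vertices being adjacent iff the union of the two corresponding critical cliques induces a clique in $G$. *)

theory Defs
  imports Complex_Main
begin

definition simple_graph :: "'a set \<Rightarrow> ('a \<Rightarrow> 'a \<Rightarrow> bool) \<Rightarrow> bool" where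
  "simple_graph V E \<longleftrightarrow> finite V \<and> (\<forall>u v. E u v \<longrightarrow> u \<in> V \<and> v \<in> V)
     \<and> (\<forall>u v. E u v \<longrightarrow> E v u) \<and> (\<forall>u. \<not> E u u)"

definition box_set :: "nat \<Rightarrow> (nat \<Rightarrow> real \<times> real) \<Rightarrow> (nat \<Rightarrow> real) set" where
  "box_set t B = {x. (\<forall>i<t. fst (B i) \<le> x i \<and> x i \<le> snd (B i)) \<and> (\<forall>i\<ge>t. x i = 0)}"

definition box_rep :: "nat \<Rightarrow> 'a set \<Rightarrow> ('a \<Rightarrow> 'a \<Rightarrow> bool) \<Rightarrow> bool" where
  "box_rep t V E \<longleftrightarrow> (\<exists>f :: 'a \<Rightarrow> nat \<Rightarrow> real \<times> real.
     (\<forall>v\<in>V. \<forall>i<t. fst (f v i) \<le> snd (f v i)) \<and>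
     (\<forall>u\<in>V. \<forall>v\<in>V. u \<noteq> v \<longrightarrow> (E u v \<longleftrightarrow> box_set t (f u) \<inter> box_set t (f v) \<noteq> {})))"

definition boxicity :: "'a set \<Rightarrow> ('a \<Rightarrow> 'a \<Rightarrow> bool) \<Rightarrow> nat" where
  "boxicity V E = (LEAST t. box_rep t V E)"

definition is_clique :: "'a set \<Rightarrow> ('a \<Rightarrow> 'a \<Rightarrow> bool) \<Rightarrow> 'a set \<Rightarrow> bool" where
  "is_clique V E C \<longleftrightarrow> C \<subseteq> V \<and> (\<forall>u\<in>C. \<forall>v\<in>C. u \<noteq> v \<longrightarrow> E u v)"

definition closed_nbhd :: "'a set \<Rightarrow> ('a \<Rightarrow> 'a \<Rightarrow> bool) \<Rightarrow> 'a \<Rightarrow> 'a set" where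
  "closed_nbhd V E v = insert v {u \<in> V. E v u}"

definition uniform_clique :: "'a set \<Rightarrow> ('a \<Rightarrow> 'a \<Rightarrow> bool) \<Rightarrow> 'a set \<Rightarrow> bool" where
  "uniform_clique V E C \<longleftrightarrow> C \<noteq> {} \<and> is_clique V E C \<and>
     (\<forall>u\<in>C. \<forall>v\<in>C. closed_nbhd V E u = closed_nbhd V E v)"

definition critical_cliques :: "'a set \<Rightarrow> ('a \<Rightarrow> 'a \<Rightarrow> bool) \<Rightarrow> 'a set set" where
  "critical_cliques V E = {C. uniform_clique V E C \<and>
     (\<forall>D. uniform_clique V E D \<and> C \<subseteq> D \<longrightarrow> D = C)}"

definition cc_edge :: "'a set \<Rightarrow> ('a \<Rightarrow> 'a \<Rightarrow> bool) \<Rightarrow> 'a set \<Rightarrow> 'a set \<Rightarrow> bool" where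
  "cc_edge V E C D \<longleftrightarrow> C \<in> critical_cliques V E \<and> D \<in> critical_cliques V E \<and> C \<noteq> D
     \<and> is_clique V E (C \<union> D)"

end

theory Submission
  imports Defs
begin

definition cls :: "'a set \<Rightarrow> ('a \<Rightarrow> 'a \<Rightarrow> bool) \<Rightarrow> 'a \<Rightarrow> 'a set" where
  "cls V E v = {u \<in> V. closed_nbhd V E u = closed_nbhd V E v}"

lemma twin_edge:
  assumes "closed_nbhd V E u = closed_nbhd V E v" "u \<noteq> v"
  shows "E u v"
proof -
  have "v \<in> closed_nbhd V E v" by (simp add: closed_nbhd_def)
  with assms show ?thesis by (auto simp: closed_nbhd_def)
qed

lemma cross_edge:
  assumes G: "simple_graph V E" and a: "a \<in> cls V E u" and b: "b \<in> cls V E v"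
    and e: "E u v" and ne: "a \<noteq> b"
  shows "E a b"
proof -
  have na: "closed_nbhd V E a = closed_nbhd V E u" using a by (simp add: cls_def)
  have nb: "closed_nbhd V E b = closed_nbhd V E v" using b by (simp add: cls_def)
  have vV: "v \<in> V" using G e by (simp add: simple_graph_def)
  have "v \<in> closed_nbhd V E u" using e vV by (simp add: closed_nbhd_def)
  hence "v \<in> closed_nbhd V E a" using na by simp
  hence "v = a \<or> E a v" by (auto simp: closed_nbhd_def)
  thus ?thesis
  proof
    assume "v = a"
    thus ?thesis using na nb ne twin_edge by metis
  next
    assume av: "E a v"
    have aV: "a \<in> V" using a by (simp add: cls_def)
    have "a \<in> closed_nbhd V E v" using av G aV
      by (auto simp: closed_nbhd_def simple_graph_def)
    hence "a \<in> closed_nbhd V E b" using nb by simp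
    hence "E b a" using ne by (simp add: closed_nbhd_def)
    thus ?thesis using G by (simp add: simple_graph_def)
  qed
qed

lemma cls_uniform:
  assumes "v \<in> V"
  shows "uniform_clique V E (cls V E v)"
  using assms unfolding uniform_clique_def is_clique_def cls_def
  by (auto intro: twin_edge[of V E] simp del: closed_nbhd_def)

lemma cls_crit:
  assumes "v \<in> V"
  shows "cls V E v \<in> critical_cliques V E"
proof -
  have "D = cls V E v" if "uniform_clique V E D" "cls V E v \<subseteq> D" for D
  proof
    show "cls V E v \<subseteq> D" by fact
    have vD: "v \<in> D" using that(2) assms by (auto simp: cls_def)
    show "D \<subseteq> cls V E v"
    proof
      fix d assume dD: "d \<in> D"
      have "d \<in> V" using that(1) dD unfolding uniform_clique_def is_clique_def by blast
      moreover have "closed_nbhd V E d = closed_nbhd V E v"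
        using that(1) dD vD unfolding uniform_clique_def by blast
      ultimately show "d \<in> cls V E v" unfolding cls_def by blast
    qed
  qed
  thus ?thesis using cls_uniform[OF assms] unfolding critical_cliques_def by blast
qed

lemma crit_cls:
  assumes "C \<in> critical_cliques V E" "v \<in> C"
  shows "C = cls V E v" "v \<in> V"
proof -
  have C: "uniform_clique V E C" and mx: "\<And>D. uniform_clique V E D \<Longrightarrow> C \<subseteq> D \<Longrightarrow> D = C"
    using assms(1) unfolding critical_cliques_def by blast+
  have CV: "C \<subseteq> V" using C unfolding uniform_clique_def is_clique_def by blast
  show vV: "v \<in> V" using CV assms(2) by blast
  have "C \<subseteq> cls V E v"
  proof
    fix c assume "c \<in> C"
    moreover have "\<forall>u\<in>C. \<forall>w\<in>C. closed_nbhd V E u = closed_nbhd V E w"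
      using C unfolding uniform_clique_def by blast
    ultimately show "c \<in> cls V E v" using CV assms(2) unfolding cls_def by blast
  qed
  thus "C = cls V E v" using mx[OF cls_uniform[OF vV]] by simp
qed

lemma cls_clique:
  assumes G: "simple_graph V E" and uV: "u \<in> V" and vV: "v \<in> V"
    and ne: "cls V E u \<noteq> cls V E v"
  shows "is_clique V E (cls V E u \<union> cls V E v) \<longleftrightarrow> E u v"
proof
  assume "is_clique V E (cls V E u \<union> cls V E v)"
  moreover have "u \<in> cls V E u" "v \<in> cls V E v" using uV vV by (auto simp: cls_def)
  moreover have "u \<noteq> v" using ne by auto
  ultimately show "E u v" by (auto simp: is_clique_def)
next
  assume e: "E u v"
  have e': "E v u" using G e by (simp add: simple_graph_def)
  show "is_clique V E (cls V E u \<union> cls V E v)"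
    unfolding is_clique_def
  proof (intro conjI ballI impI)
    show "cls V E u \<union> cls V E v \<subseteq> V" by (auto simp: cls_def)
  next
    fix a b assume a: "a \<in> cls V E u \<union> cls V E v" and b: "b \<in> cls V E u \<union> cls V E v" and ab: "a \<noteq> b"
    show "E a b"
      using a b
    proof (elim UnE)
      assume "a \<in> cls V E u" "b \<in> cls V E u" thus ?thesis using ab twin_edge by (metis (mono_tags, lifting) cls_def mem_Collect_eq)
    next
      assume "a \<in> cls V E v" "b \<in> cls V E v" thus ?thesis using ab twin_edge by (metis (mono_tags, lifting) cls_def mem_Collect_eq)
    next
      assume "a \<in> cls V E u" "b \<in> cls V E v" thus ?thesis using cross_edge[OF G _ _ e ab] by blast
    next
      assume "a \<in> cls V E v" "b \<in> cls V E u" thus ?thesis using cross_edge[OF G _ _ e' ab] by blast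
    qed
  qed
qed

lemma box_nonempty:
  assumes "\<forall>i<t. fst (B i) \<le> snd (B i)"
  shows "box_set t B \<noteq> {}"
proof -
  have "(\<lambda>i. if i < t then fst (B i) else 0) \<in> box_set t B"
    using assms by (auto simp: box_set_def)
  thus ?thesis by blast
qed

lemma dir1:
  assumes G: "simple_graph V E" and r: "box_rep t V E"
  shows "box_rep t (critical_cliques V E) (cc_edge V E)"
proof -
  obtain f where f1: "\<forall>v\<in>V. \<forall>i<t. fst (f v i) \<le> snd (f v i)"
    and f2: "\<forall>u\<in>V. \<forall>v\<in>V. u \<noteq> v \<longrightarrow> (E u v \<longleftrightarrow> box_set t (f u) \<inter> box_set t (f v) \<noteq> {})"
    using r by (auto simp: box_rep_def)
  define rep where "rep C = (SOME v. v \<in> C)" for C :: "'a set"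
  have repC: "rep C \<in> C" "C = cls V E (rep C)" "rep C \<in> V" if "C \<in> critical_cliques V E" for C
  proof -
    have "C \<noteq> {}" using that by (auto simp: critical_cliques_def uniform_clique_def)
    thus "rep C \<in> C" unfolding rep_def by (meson ex_in_conv someI_ex)
    thus "C = cls V E (rep C)" "rep C \<in> V" using crit_cls[OF that] by auto
  qed
  show ?thesis unfolding box_rep_def
  proof (intro exI[of _ "\<lambda>C. f (rep C)"] conjI ballI impI allI)
    fix C i assume "C \<in> critical_cliques V E" "i < t"
    thus "fst (f (rep C) i) \<le> snd (f (rep C) i)" using f1 repC by blast
  next
    fix C D assume C: "C \<in> critical_cliques V E" and D: "D \<in> critical_cliques V E" and ne: "C \<noteq> D"
    have rne: "rep C \<noteq> rep D" using repC[OF C] repC[OF D] ne by metis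
    have cne: "cls V E (rep C) \<noteq> cls V E (rep D)" using repC[OF C] repC[OF D] ne by metis
    have "cc_edge V E C D \<longleftrightarrow> is_clique V E (C \<union> D)" using C D ne by (simp add: cc_edge_def)
    also have "\<dots> \<longleftrightarrow> E (rep C) (rep D)"
      using cls_clique[OF G repC(3)[OF C] repC(3)[OF D] cne] repC[OF C] repC[OF D] by metis
    also have "\<dots> \<longleftrightarrow> box_set t (f (rep C)) \<inter> box_set t (f (rep D)) \<noteq> {}"
      using f2 repC(3)[OF C] repC(3)[OF D] rne by blast
    finally show "cc_edge V E C D \<longleftrightarrow> box_set t (f (rep C)) \<inter> box_set t (f (rep D)) \<noteq> {}" .
  qed
qed

lemma dir2:
  assumes G: "simple_graph V E" and r: "box_rep t (critical_cliques V E) (cc_edge V E)"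
  shows "box_rep t V E"
proof -
  obtain g where g1: "\<forall>C\<in>critical_cliques V E. \<forall>i<t. fst (g C i) \<le> snd (g C i)"
    and g2: "\<forall>C\<in>critical_cliques V E. \<forall>D\<in>critical_cliques V E. C \<noteq> D \<longrightarrow>
        (cc_edge V E C D \<longleftrightarrow> box_set t (g C) \<inter> box_set t (g D) \<noteq> {})"
    using r by (auto simp: box_rep_def)
  show ?thesis unfolding box_rep_def
  proof (intro exI[of _ "\<lambda>v. g (cls V E v)"] conjI ballI impI allI)
    fix v i assume "v \<in> V" "i < t"
    thus "fst (g (cls V E v) i) \<le> snd (g (cls V E v) i)" using g1 cls_crit[of v V E] by simp
  next
    fix u v assume uV: "u \<in> V" and vV: "v \<in> V" and ne: "u \<noteq> v"
    show "E u v \<longleftrightarrow> box_set t (g (cls V E u)) \<inter> box_set t (g (cls V E v)) \<noteq> {}"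
    proof (cases "cls V E u = cls V E v")
      case True
      have "u \<in> cls V E v" using True uV by (auto simp: cls_def)
      hence "E u v" using twin_edge[of V E u v] ne unfolding cls_def by simp
      moreover have "box_set t (g (cls V E v)) \<noteq> {}"
        using box_nonempty[of t "g (cls V E v)"] g1 cls_crit[OF vV] by simp
      ultimately show ?thesis using True by simp
    next
      case False
      have "E u v \<longleftrightarrow> is_clique V E (cls V E u \<union> cls V E v)"
        using cls_clique[OF G uV vV False] by simp
      also have "\<dots> \<longleftrightarrow> cc_edge V E (cls V E u) (cls V E v)"
        using cls_crit[OF uV] cls_crit[OF vV] False by (simp add: cc_edge_def)
      also have "\<dots> \<longleftrightarrow> box_set t (g (cls V E u)) \<inter> box_set t (g (cls V E v)) \<noteq> {}"
        using g2 cls_crit[OF uV] cls_crit[OF vV] False by simp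
      finally show ?thesis .
    qed
  qed
qed

theorem lemma3:
  fixes V :: "'a set" and E :: "'a \<Rightarrow> 'a \<Rightarrow> bool"
  assumes "simple_graph V E"
  shows "boxicity V E = boxicity (critical_cliques V E) (cc_edge V E)"
proof -
  have "\<And>t. box_rep t V E \<longleftrightarrow> box_rep t (critical_cliques V E) (cc_edge V E)"
    using dir1[OF assms] dir2[OF assms] by blast
  thus ?thesis unfolding boxicity_def by simp
qed

end
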